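(* Let $D,\chi,\varepsilon>0$, $a\ge0$, $\beta\ge 0$, $b=D\beta^2$, and let $0<r_0<r_1$. Suppose $\rho\in C^0[0,\infty)$, $\phi\in C^2[0,\infty)$ satisfy $\rho(0)=0$, $\phi(0)\ge 0$, $\rho>0$ on $(r_0,r_1)$, $\rho\equiv0$ on $[0,r_0]\cup[r_1,\infty)$, $D\phi_{rr}+D\frac{\phi_r}{r}+a\rho-b\phi=0$ on $(0,\infty)$, and on $(r_0,r_1)$ the relation $\varepsilon\rho=\chi\phi+K$ holds for a constant $K$. If $K=0$ and $\phi_r(r_0)=\phi_r(r_1)=0$, then no such solution exists (i.e. there is no nontrivial solution of this form).
   Context: The relation $\varepsilon\rho=\chi\phi+K$ on the positivity region is the integrated form of the equation $\partial_r(\frac{\varepsilon}{2}\rho^2)=\chi\rho\phi_r$ from the radially symmetric stationary form of a hyperbolic-parabolic chemotaxis model on $\mathbb{R}^2$ with pressure $p(\rho)=\frac{\varepsilon}{2}\rho^2$. *)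

theory Defs
  imports "HOL-Analysis.Analysis"
begin

end

theory Submission
  imports Defs
begin
lemma aux: fixes r D p1 p2 a q b f eps chi :: real
  assumes r: "r > 0" and e1: "D*p2 + D*p1/r + a*q - b*f = 0" and e2: "eps*q = chi*f"
  shows "eps*D*(p1 + r*p2) = r*f*(b*eps - a*chi)"
proof -
  have "r * (D*p2 + D*p1/r + a*q - b*f) = 0" using e1 by simp
  hence h: "D*(p1 + r*p2) = r*(b*f - a*q)" using r by (simp add: algebra_simps)
  have "eps*D*(p1 + r*p2) = eps*(D*(p1 + r*p2))" by simp
  also have "\<dots> = eps*(r*(b*f - a*q))" using h by simp
  also have "\<dots> = r*(b*eps*f - a*(eps*q))" by (simp add: algebra_simps)
  also have "\<dots> = r*(b*eps*f - a*(chi*f))" using e2 by simp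
  also have "\<dots> = r*f*(b*eps - a*chi)" by (simp add: algebra_simps)
  finally show ?thesis .
qed

theorem proposition7p1:
  fixes D chi eps a \<beta> b r0 r1 K :: real
    and \<rho> \<phi> \<phi>' \<phi>'' :: "real \<Rightarrow> real"
  assumes D_pos: "D > 0" and chi_pos: "chi > 0" and eps_pos: "eps > 0"
    and a_nonneg: "a \<ge> 0" and beta_nonneg: "\<beta> \<ge> 0" and b_def: "b = D * \<beta>\<^sup>2"
    and r0_pos: "0 < r0" and r01: "r0 < r1"
    and rho_cont: "continuous_on {0..} \<rho>"
    and phi_d1: "\<And>r. r \<ge> 0 \<Longrightarrow> (\<phi> has_real_derivative \<phi>' r) (at r within {0..})"
    and phi_d2: "\<And>r. r \<ge> 0 \<Longrightarrow> (\<phi>' has_real_derivative \<phi>'' r) (at r within {0..})"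
    and phi''_cont: "continuous_on {0..} \<phi>''"
    and rho0: "\<rho> 0 = 0" and phi0: "\<phi> 0 \<ge> 0"
    and rho_pos: "\<And>r. r0 < r \<Longrightarrow> r < r1 \<Longrightarrow> \<rho> r > 0"
    and rho_zero: "\<And>r. (0 \<le> r \<and> r \<le> r0) \<or> r1 \<le> r \<Longrightarrow> \<rho> r = 0"
    and ode: "\<And>r. r > 0 \<Longrightarrow> D * \<phi>'' r + D * \<phi>' r / r + a * \<rho> r - b * \<phi> r = 0"
    and rel: "\<And>r. r0 < r \<Longrightarrow> r < r1 \<Longrightarrow> eps * \<rho> r = chi * \<phi> r + K"
    and K0: "K = 0"
    and bc0: "\<phi>' r0 = 0" and bc1: "\<phi>' r1 = 0"
  shows False
proof -
  have d1: "(\<phi> has_real_derivative \<phi>' r) (at r)" if "r > 0" for r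
  proof -
    have "at r within {0..} = at r" by (rule at_within_interior) (use that in simp)
    thus ?thesis using phi_d1[of r] that by simp
  qed
  have d2: "(\<phi>' has_real_derivative \<phi>'' r) (at r)" if "r > 0" for r
  proof -
    have "at r within {0..} = at r" by (rule at_within_interior) (use that in simp)
    thus ?thesis using phi_d2[of r] that by simp
  qed
  have contphi: "continuous_on {0..} \<phi>"
    by (rule DERIV_continuous_on) (use phi_d1 in auto)
  define h where "h = (\<lambda>r. eps * \<rho> r - chi * \<phi> r)"
  have hcont: "continuous_on {r0..r1} h"
    unfolding h_def using r0_pos
    by (intro continuous_intros continuous_on_subset[OF rho_cont] continuous_on_subset[OF contphi]) auto
  have "h r0 = 0"
    apply (rule continuous_constant_on_closure[where S="{r0<..<r1}" and f=h and a=0 and x=r0])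
    using hcont r01 rel K0 by (auto simp: h_def)
  hence phir0: "\<phi> r0 = 0" using rho_zero[of r0] r0_pos chi_pos by (simp add: h_def)
  define g where "g = (\<lambda>r. r * \<phi>' r)"
  have dg: "(g has_real_derivative (\<phi>' r + r * \<phi>'' r)) (at r)" if "r > 0" for r
    unfolding g_def using d2[OF that] by (auto intro!: derivative_eq_intros)
  have key: "eps * D * (\<phi>' r + r * \<phi>'' r) = r * \<phi> r * (b * eps - a * chi)" if "r0 < r" "r < r1" for r
  proof (rule aux)
    show "r > 0" using that r0_pos by simp
    thus "D * \<phi>'' r + D * \<phi>' r / r + a * \<rho> r - b * \<phi> r = 0" using ode by blast
    show "eps * \<rho> r = chi * \<phi> r" using rel[OF that] K0 by simp
  qed
  have phipos: "\<phi> r > 0" if "r0 < r" "r < r1" for r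
  proof -
    have "0 < eps * \<rho> r" using rho_pos[OF that] eps_pos by simp
    hence "0 < chi * \<phi> r" using rel[OF that] K0 by simp
    thus ?thesis using chi_pos zero_less_mult_pos by blast
  qed
  obtain z where z: "z > r0" "z < r1" "g r1 - g r0 = (r1 - r0) * (\<phi>' z + z * \<phi>'' z)"
  proof -
    have "\<And>x. r0 \<le> x \<Longrightarrow> x \<le> r1 \<Longrightarrow> (g has_real_derivative (\<phi>' x + x * \<phi>'' x)) (at x)"
      using dg r0_pos by simp
    from MVT2[OF r01 this] show ?thesis using that by blast
  qed
  have "\<phi>' z + z * \<phi>'' z = 0" using z r01 bc0 bc1 by (simp add: g_def)
  hence "z * \<phi> z * (b * eps - a * chi) = 0" using key[OF z(1,2)] by simp
  hence k: "b * eps - a * chi = 0" using phipos[OF z(1,2)] z r0_pos by simp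
  have gcont: "continuous_on {r0..r1} g"
    by (rule DERIV_continuous_on, rule has_field_derivative_at_within, rule dg) (use r0_pos in auto)
  have g0: "g x = 0" if "r0 \<le> x" "x \<le> r1" for x
  proof -
    have "g x = g r0"
    proof (rule DERIV_isconst2[OF r01 gcont _ that])
      fix y assume y: "r0 < y" "y < r1"
      have "\<phi>' y + y * \<phi>'' y = 0" using key[OF y] k D_pos eps_pos by simp
      thus "(g has_real_derivative 0) (at y)" using dg[of y] y r0_pos by simp
    qed
    thus ?thesis using bc0 by (simp add: g_def)
  qed
  define m where "m = (r0 + r1) / 2"
  have m: "r0 < m" "m < r1" using r01 by (auto simp: m_def)
  have "\<phi> m = \<phi> r0"
  proof (rule DERIV_isconst2[of r0 m])
    show "r0 < m" "r0 \<le> m" "m \<le> m" using m by auto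
    show "continuous_on {r0..m} \<phi>" using r0_pos
      by (intro continuous_on_subset[OF contphi]) auto
    fix y assume y: "r0 < y" "y < m"
    have "y * \<phi>' y = 0" using g0[of y] y m by (simp add: g_def)
    hence "\<phi>' y = 0" using y r0_pos by simp
    thus "(\<phi> has_real_derivative 0) (at y)" using d1[of y] y r0_pos by simp
  qed
  thus False using phipos[OF m] phir0 by simp
qed

end
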